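(* Let $\mathbf{T}$ be the dappled triangular grid. For any vertex $v$ of $\mathbf{T}$, if $u_1$ and $u_2$ are distinct neighbors of $v$, then $(\psi_{\mathbf{T}}(u_1),\varphi_{\mathbf{T}}(u_1))\neq(\psi_{\mathbf{T}}(u_2),\varphi_{\mathbf{T}}(u_2))$. Consequently, for any connected dappled graph $G$ and any vertex $x\in V(G)$, if $f_1,f_2:V(G)\to V(\mathbf{T})$ are homomorphisms of dappled graphs with $f_1(x)=f_2(x)$, then $f_1=f_2$.
   Context: A hued graph is a graph $G$ together with a proper coloring $\psi_G:V(G)\to\mathbb{Z}_3$ (the hue). A dappled graph is a hued graph $G$ together with a proper coloring $\varphi_G:V(G)\to\mathbb{Z}_2^2$ (the color). A homomorphism of dappled graphs $f:V(G)\to V(H)$ maps edges to edges and satisfies $\psi_H(f(v))=\psi_G(v)$ and $\varphi_H(f(v))=\varphi_G(v)$ for all $v$. The dappled triangular grid $\mathbf{T}$ has vertex set $\mathbb{Z}^2$, with $(i_1,j_1)$ and $(i_2,j_2)$ adjacent iff $(i_2-i_1,j_2-j_1)\in\{\pm(1,0),\pm(0,1),\pm(1,1)\}$, hue $\psi_{\mathbf{T}}(i,j)=(i+j)\bmod 3$ and color $\varphi_{\mathbf{T}}(i,j)=(i\bmod 2, j\bmod 2)$. *)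

theory Defs
  imports Main "HOL-Library.Numeral_Type"
begin

definition dappled_graph ::
  "'a set \<Rightarrow> ('a \<Rightarrow> 'a \<Rightarrow> bool) \<Rightarrow> ('a \<Rightarrow> 3) \<Rightarrow> ('a \<Rightarrow> 2 \<times> 2) \<Rightarrow> bool" where
  "dappled_graph V E psi phi \<longleftrightarrow>
     (\<forall>x y. E x y \<longrightarrow> x \<in> V \<and> y \<in> V) \<and>
     (\<forall>x y. E x y \<longrightarrow> E y x) \<and>
     (\<forall>x. \<not> E x x) \<and>
     (\<forall>x y. E x y \<longrightarrow> psi x \<noteq> psi y) \<and>
     (\<forall>x y. E x y \<longrightarrow> phi x \<noteq> phi y)"

definition graph_connected :: "'a set \<Rightarrow> ('a \<Rightarrow> 'a \<Rightarrow> bool) \<Rightarrow> bool" where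
  "graph_connected V E \<longleftrightarrow> V \<noteq> {} \<and> (\<forall>x\<in>V. \<forall>y\<in>V. E\<^sup>*\<^sup>* x y)"

definition dappled_hom ::
  "'a set \<Rightarrow> ('a \<Rightarrow> 'a \<Rightarrow> bool) \<Rightarrow> ('a \<Rightarrow> 3) \<Rightarrow> ('a \<Rightarrow> 2 \<times> 2) \<Rightarrow>
   'b set \<Rightarrow> ('b \<Rightarrow> 'b \<Rightarrow> bool) \<Rightarrow> ('b \<Rightarrow> 3) \<Rightarrow> ('b \<Rightarrow> 2 \<times> 2) \<Rightarrow>
   ('a \<Rightarrow> 'b) \<Rightarrow> bool" where
  "dappled_hom VG EG psiG phiG VH EH psiH phiH f \<longleftrightarrow>
     (\<forall>v\<in>VG. f v \<in> VH) \<and>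
     (\<forall>u v. EG u v \<longrightarrow> EH (f u) (f v)) \<and>
     (\<forall>v\<in>VG. psiH (f v) = psiG v \<and> phiH (f v) = phiG v)"

definition T_adj :: "int \<times> int \<Rightarrow> int \<times> int \<Rightarrow> bool" where
  "T_adj p q \<longleftrightarrow> (fst q - fst p, snd q - snd p) \<in>
     {(1,0), (-1,0), (0,1), (0,-1), (1,1), (-1,-1)}"

definition T_hue :: "int \<times> int \<Rightarrow> 3" where
  "T_hue p = of_int (fst p + snd p)"

definition T_color :: "int \<times> int \<Rightarrow> 2 \<times> 2" where
  "T_color p = (of_int (fst p), of_int (snd p))"

end

theory Submission
  imports Defs
begin

lemma eq3: "(of_int a :: 3) = of_int b \<longleftrightarrow> 3 dvd (a - b)"
proof -
  have "(of_int a :: 3) = of_int b \<longleftrightarrow> (of_int (a - b) :: 3) = 0" by simp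
  also have "\<dots> \<longleftrightarrow> int CHAR(3) dvd (a - b)" by (rule of_int_eq_0_iff_char_dvd)
  finally show ?thesis by simp
qed

lemma eq2: "(of_int a :: 2) = of_int b \<longleftrightarrow> 2 dvd (a - b)"
proof -
  have "(of_int a :: 2) = of_int b \<longleftrightarrow> (of_int (a - b) :: 2) = 0" by simp
  also have "\<dots> \<longleftrightarrow> int CHAR(2) dvd (a - b)" by (rule of_int_eq_0_iff_char_dvd)
  finally show ?thesis by simp
qed

lemma part1:
  assumes "T_adj v u1" "T_adj v u2" "u1 \<noteq> u2"
  shows "(T_hue u1, T_color u1) \<noteq> (T_hue u2, T_color u2)"
proof
  assume h: "(T_hue u1, T_color u1) = (T_hue u2, T_color u2)"
  obtain a b where v: "v = (a,b)" by (cases v)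
  obtain a1 b1 where u1: "u1 = (a1,b1)" by (cases u1)
  obtain a2 b2 where u2: "u2 = (a2,b2)" by (cases u2)
  from h have "(of_int (a1 + b1) :: 3) = of_int (a2 + b2)"
    unfolding T_hue_def u1 u2 by simp
  then have "3 dvd (a1 + b1 - (a2 + b2))" by (simp only: eq3)
  from h have "(of_int a1 :: 2) = of_int a2" "(of_int b1 :: 2) = of_int b2"
    unfolding T_color_def u1 u2 by simp_all
  then have "2 dvd (a1 - a2)" "2 dvd (b1 - b2)" by (simp_all only: eq2)
  note \<open>3 dvd (a1 + b1 - (a2 + b2))\<close> this
  moreover have "(a1 - a, b1 - b) \<in> {(1,0), (-1,0), (0,1), (0,-1), (1,1), (-1,-1)}"
    "(a2 - a, b2 - b) \<in> {(1,0), (-1,0), (0,1), (0,-1), (1,1), (-1,-1)}"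
    using assms(1,2) unfolding T_adj_def v u1 u2 by simp_all
  moreover have "a1 \<noteq> a2 \<or> b1 \<noteq> b2" using assms(3) u1 u2 by auto
  ultimately show False
  proof -
    assume d: "3 dvd (a1 + b1 - (a2 + b2))" "2 dvd (a1 - a2)" "2 dvd (b1 - b2)"
      and m1: "(a1 - a, b1 - b) \<in> {(1,0), (-1,0), (0,1), (0,-1), (1,1), (-1,-1)}"
      and m2: "(a2 - a, b2 - b) \<in> {(1,0), (-1,0), (0,1), (0,-1), (1,1), (-1,-1)}"
      and ne: "a1 \<noteq> a2 \<or> b1 \<noteq> b2"
    define p1 where "p1 = a1 - a"
    define q1 where "q1 = b1 - b"
    define p2 where "p2 = a2 - a"
    define q2 where "q2 = b2 - b"
    have d': "3 dvd (p1 + q1 - (p2 + q2))" "2 dvd (p1 - p2)" "2 dvd (q1 - q2)"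
      "p1 \<noteq> p2 \<or> q1 \<noteq> q2"
      using d ne unfolding p1_def q1_def p2_def q2_def by (simp_all add: algebra_simps)
    have "(p1, q1) \<in> {(1,0), (-1,0), (0,1), (0,-1), (1,1), (-1,-1)}"
      "(p2, q2) \<in> {(1,0), (-1,0), (0,1), (0,-1), (1,1), (-1,-1)}"
      using m1 m2 unfolding p1_def q1_def p2_def q2_def by simp_all
    then show False using d' by auto
  qed
qed

lemma part2:
  assumes g: "dappled_graph V E psi phi" and c: "graph_connected V E" and x: "x \<in> V"
    and h1: "dappled_hom V E psi phi UNIV T_adj T_hue T_color f1"
    and h2: "dappled_hom V E psi phi UNIV T_adj T_hue T_color f2"
    and e: "f1 x = f2 x" and v: "v \<in> V"
  shows "f1 v = f2 v"
proof -
  from c x v have "E\<^sup>*\<^sup>* x v" unfolding graph_connected_def by blast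
  then show ?thesis
  proof (induction rule: rtranclp_induct)
    case base then show ?case using e by simp
  next
    case (step y z)
    have yz: "y \<in> V" "z \<in> V" using g step(2) unfolding dappled_graph_def by blast+
    have a1: "T_adj (f1 y) (f1 z)" and a2: "T_adj (f2 y) (f2 z)"
      using h1 h2 step(2) unfolding dappled_hom_def by blast+
    have "T_hue (f1 z) = psi z" "T_color (f1 z) = phi z"
      using h1 yz(2) unfolding dappled_hom_def by blast+
    moreover have "T_hue (f2 z) = psi z" "T_color (f2 z) = phi z"
      using h2 yz(2) unfolding dappled_hom_def by blast+
    moreover have "T_adj (f1 y) (f2 z)" using a2 step(3) by simp
    ultimately show ?case using part1[of "f1 y" "f1 z" "f2 z"] a1 by auto
  qed
qed

theorem mainTheorem3:
  shows "(\<forall>v u1 u2. T_adj v u1 \<and> T_adj v u2 \<and> u1 \<noteq> u2 \<longrightarrow>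
            (T_hue u1, T_color u1) \<noteq> (T_hue u2, T_color u2)) \<and>
         (\<forall>(V :: 'a set) E psi phi x f1 f2.
            dappled_graph V E psi phi \<and> graph_connected V E \<and> x \<in> V \<and>
            dappled_hom V E psi phi UNIV T_adj T_hue T_color f1 \<and>
            dappled_hom V E psi phi UNIV T_adj T_hue T_color f2 \<and>
            f1 x = f2 x \<longrightarrow> (\<forall>v\<in>V. f1 v = f2 v))"
proof (intro conjI)
  show "\<forall>v u1 u2. T_adj v u1 \<and> T_adj v u2 \<and> u1 \<noteq> u2 \<longrightarrow>
            (T_hue u1, T_color u1) \<noteq> (T_hue u2, T_color u2)"
    using part1 by (intro allI impI) (elim conjE, assumption)
  show "\<forall>(V :: 'a set) E psi phi x f1 f2.
            dappled_graph V E psi phi \<and> graph_connected V E \<and> x \<in> V \<and>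
            dappled_hom V E psi phi UNIV T_adj T_hue T_color f1 \<and>
            dappled_hom V E psi phi UNIV T_adj T_hue T_color f2 \<and>
            f1 x = f2 x \<longrightarrow> (\<forall>v\<in>V. f1 v = f2 v)"
  proof (intro allI impI ballI)
    fix V :: "'a set" and E psi phi x f1 f2 v
    assume "dappled_graph V E psi phi \<and> graph_connected V E \<and> x \<in> V \<and>
            dappled_hom V E psi phi UNIV T_adj T_hue T_color f1 \<and>
            dappled_hom V E psi phi UNIV T_adj T_hue T_color f2 \<and> f1 x = f2 x" "v \<in> V"
    then show "f1 v = f2 v" using part2[of V E psi phi x f1 f2 v] by blast
  qed
qed

end
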